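(* Let $\Sigma$ be a ranked alphabet, $B$ a strong bimonoid and $\mathcal{A}=(Q,\delta,F)$ a $(\Sigma,B)$-wta with the finite order property. For every $(q,b)\in Q\times H_{\mathcal{A}}$ and $\xi=\sigma(\xi_1,\dots,\xi_k)\in T_\Sigma$, $$p_\xi(q,b)=\sum_{(q_1,b_1)\dots(q_k,b_k)\in S_\xi(q,b)}\ \prod_{i=1}^k p_{\xi_i}(q_i,b_i).$$
   Context: Ranked alphabet $\Sigma$ ($\Sigma^{(0)}\ne\emptyset$), trees $T_\Sigma$, positions $\mathrm{pos}(\xi)$; strong bimonoid $(B,\oplus,\otimes,\mathbb{0},\mathbb{1})$ (commutative monoid $(B,\oplus,\mathbb{0})$, monoid $(B,\otimes,\mathbb{1})$, $\mathbb{0}\ne\mathbb{1}$, $\mathbb{0}$ absorbing). For $b\in B$, $nb=b\oplus\cdots\oplus b$ ($n$ times, $0b=\mathbb{0}$); $b$ has finite order if $\{nb\mid n\in\mathbb{N}\}$ is finite; then its index $i(b)$ is the least $i\ge1$ with $ib=(i+k)b$ for some $k\ge1$, and its period $p(b)$ the least $p\ge1$ with $i(b)b=(i(b)+p)b$. $(\Sigma,B)$-wta $\mathcal{A}=(Q,\delta,F)$: $Q$ finite nonempty, $\delta_k:Q^k\times\Sigma^{(k)}\times Q\to B$, $F:Q\to B$. A $q$-run on $\xi$ is $\rho:\mathrm{pos}(\xi)\to Q$ with $\rho(\varepsilon)=q$; $R_{\mathcal{A}}(q,\xi)$ the set of them; $\rho|_i(w)=\rho(iw)$; $\mathrm{wt}_{\mathcal{A}}(\rho)=\big(\bigotimes_{i=1}^k\mathrm{wt}_{\mathcal{A}}(\rho|_i)\big)\otimes\delta_k(\rho(1)\dots\rho(k),\sigma,\rho(\varepsilon))$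 for $\xi=\sigma(\xi_1,\dots,\xi_k)$. $H_{\mathcal{A}}$ is the smallest subset of $B$ containing $\bigcup_k\mathrm{im}(\delta_k)$ and closed under $\otimes$. $\mathcal{A}$ has the finite order property if $H_{\mathcal{A}}$ is finite and each element of $H_{\mathcal{A}}\otimes\mathrm{im}(F)=\{a\otimes c\mid a\in H_{\mathcal{A}},c\in\mathrm{im}(F)\}$ has finite order in $(B,\oplus,\mathbb{0})$. Then $i_{\mathcal{A}}=\max\{i(b)\mid b\in H_{\mathcal{A}}\otimes\mathrm{im}(F)\}$, $p_{\mathcal{A}}=\mathrm{lcm}\{p(b)\mid b\in H_{\mathcal{A}}\otimes\mathrm{im}(F)\}$, and $J_{\mathcal{A}}(n)=n$ if $n<i_{\mathcal{A}}$, $J_{\mathcal{A}}(n)=i_{\mathcal{A}}+((n-i_{\mathcal{A}})\bmod p_{\mathcal{A}})$ otherwise. For $(q,b)\in Q\times H_{\mathcal{A}}$: $R_{\mathcal{A}}(q,\xi,b)=\{\rho\in R_{\mathcal{A}}(q,\xi)\mid\mathrm{wt}_{\mathcal{A}}(\rho)=b\}$, $p_\xi(q,b)=|R_{\mathcal{A}}(q,\xi,b)|$, $\pi_\xi(q,b)=J_{\mathcal{A}}(p_\xi(q,b))$. For $\xi=\sigma(\xi_1,\dots,\xi_k)$, $S_\xi(q,b)$ is the set of tuples $((q_1,b_1),\dots,(q_k,b_k))\in(Q\times H_{\mathcal{A}})^k$ with $\pi_{\xi_i}(q_i,b_i)>0$ for all $i\in[k]$ and $\big(\bigotimes_{i=1}^k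 b_i\big)\otimes\delta_k(q_1\dots q_k,\sigma,q)=b$. (Sums and products in the claim are of natural numbers.) *)

theory Defs
  imports "HOL-Library.FuncSet"
begin

text \<open>A ranked alphabet is a finite set Sig of symbols with a rank function rk.
  Trees are unranked node-labelled trees; the trees over the ranked alphabet
  (T_Sigma) are those that are well-ranked.\<close>

datatype 'f tree = Node 'f "'f tree list"

definition ranked_alphabet :: "'f set \<Rightarrow> ('f \<Rightarrow> nat) \<Rightarrow> bool" where
  "ranked_alphabet Sig rk \<longleftrightarrow> finite Sig \<and> (\<exists>\<sigma>\<in>Sig. rk \<sigma> = 0)"

fun wf_tree :: "'f set \<Rightarrow> ('f \<Rightarrow> nat) \<Rightarrow> 'f tree \<Rightarrow> bool" where
  "wf_tree Sig rk (Node f ts) \<longleftrightarrow> f \<in> Sig \<and> length ts = rk f \<and> (\<forall>t\<in>set ts. wf_tree Sig rk t)"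

text \<open>Positions are lists of child indices; children are indexed from 0
  (index i here corresponds to i+1 in the paper).\<close>

inductive is_pos :: "'f tree \<Rightarrow> nat list \<Rightarrow> bool" where
  root: "is_pos t []"
| child: "i < length ts \<Longrightarrow> is_pos (ts ! i) w \<Longrightarrow> is_pos (Node g ts) (i # w)"

definition positions :: "'f tree \<Rightarrow> nat list set" where
  "positions t = {w. is_pos t w}"

definition nat_times :: "('b \<Rightarrow> 'b \<Rightarrow> 'b) \<Rightarrow> 'b \<Rightarrow> nat \<Rightarrow> 'b \<Rightarrow> 'b" where
  "nat_times bplus bzero n b = ((bplus b) ^^ n) bzero"

definition strong_bimonoid :: "('b \<Rightarrow> 'b \<Rightarrow> 'b) \<Rightarrow> ('b \<Rightarrow> 'b \<Rightarrow> 'b) \<Rightarrow> 'b \<Rightarrow> 'b \<Rightarrow> bool" where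
  "strong_bimonoid bplus btimes bzero bone \<longleftrightarrow>
     (\<forall>a b c. bplus (bplus a b) c = bplus a (bplus b c)) \<and>
     (\<forall>a b. bplus a b = bplus b a) \<and>
     (\<forall>a. bplus bzero a = a) \<and>
     (\<forall>a b c. btimes (btimes a b) c = btimes a (btimes b c)) \<and>
     (\<forall>a. btimes bone a = a \<and> btimes a bone = a) \<and>
     bzero \<noteq> bone \<and>
     (\<forall>a. btimes bzero a = bzero \<and> btimes a bzero = bzero)"

definition finite_order :: "('b \<Rightarrow> 'b \<Rightarrow> 'b) \<Rightarrow> 'b \<Rightarrow> 'b \<Rightarrow> bool" where
  "finite_order bplus bzero b \<longleftrightarrow> finite (range (\<lambda>n. nat_times bplus bzero n b))"

definition order_index :: "('b \<Rightarrow> 'b \<Rightarrow> 'b) \<Rightarrow> 'b \<Rightarrow> 'b \<Rightarrow> nat" where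
  "order_index bplus bzero b =
     (LEAST i. 1 \<le> i \<and> (\<exists>k\<ge>1. nat_times bplus bzero i b = nat_times bplus bzero (i + k) b))"

definition order_period :: "('b \<Rightarrow> 'b \<Rightarrow> 'b) \<Rightarrow> 'b \<Rightarrow> 'b \<Rightarrow> nat" where
  "order_period bplus bzero b =
     (LEAST p. 1 \<le> p \<and> nat_times bplus bzero (order_index bplus bzero b) b
                         = nat_times bplus bzero (order_index bplus bzero b + p) b)"

definition mprod :: "('b \<Rightarrow> 'b \<Rightarrow> 'b) \<Rightarrow> 'b \<Rightarrow> 'b list \<Rightarrow> 'b" where
  "mprod btimes bone bs = foldr btimes bs bone"

text \<open>A wta (Q, delta, F): delta qs sigma q is delta_k(q_1...q_k, sigma, q) for
  k = rk sigma = length qs.\<close>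

definition wta :: "'f set \<Rightarrow> ('f \<Rightarrow> nat) \<Rightarrow> 'q set \<Rightarrow> bool" where
  "wta Sig rk Q \<longleftrightarrow> finite Q \<and> Q \<noteq> {}"

definition im_delta :: "'f set \<Rightarrow> ('f \<Rightarrow> nat) \<Rightarrow> 'q set \<Rightarrow> ('q list \<Rightarrow> 'f \<Rightarrow> 'q \<Rightarrow> 'b) \<Rightarrow> 'b set" where
  "im_delta Sig rk Q \<delta> =
     {\<delta> qs \<sigma> q | qs \<sigma> q. \<sigma> \<in> Sig \<and> qs \<in> lists Q \<and> length qs = rk \<sigma> \<and> q \<in> Q}"

inductive_set H_A :: "'f set \<Rightarrow> ('f \<Rightarrow> nat) \<Rightarrow> 'q set \<Rightarrow> ('q list \<Rightarrow> 'f \<Rightarrow> 'q \<Rightarrow> 'b)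
                       \<Rightarrow> ('b \<Rightarrow> 'b \<Rightarrow> 'b) \<Rightarrow> 'b set"
  for Sig rk Q \<delta> btimes where
  base: "a \<in> im_delta Sig rk Q \<delta> \<Longrightarrow> a \<in> H_A Sig rk Q \<delta> btimes"
| mult: "a \<in> H_A Sig rk Q \<delta> btimes \<Longrightarrow> c \<in> H_A Sig rk Q \<delta> btimes \<Longrightarrow> btimes a c \<in> H_A Sig rk Q \<delta> btimes"

definition HF :: "'f set \<Rightarrow> ('f \<Rightarrow> nat) \<Rightarrow> 'q set \<Rightarrow> ('q list \<Rightarrow> 'f \<Rightarrow> 'q \<Rightarrow> 'b) \<Rightarrow> ('q \<Rightarrow> 'b)
                  \<Rightarrow> ('b \<Rightarrow> 'b \<Rightarrow> 'b) \<Rightarrow> 'b set" where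
  "HF Sig rk Q \<delta> F btimes = {btimes a c | a c. a \<in> H_A Sig rk Q \<delta> btimes \<and> c \<in> F ` Q}"

definition finite_order_property where
  "finite_order_property Sig rk Q \<delta> F bplus btimes bzero \<longleftrightarrow>
     finite (H_A Sig rk Q \<delta> btimes) \<and>
     (\<forall>b\<in>HF Sig rk Q \<delta> F btimes. finite_order bplus bzero b)"

definition i_A where
  "i_A Sig rk Q \<delta> F bplus btimes bzero = Max (order_index bplus bzero ` HF Sig rk Q \<delta> F btimes)"

definition p_A where
  "p_A Sig rk Q \<delta> F bplus btimes bzero = Lcm (order_period bplus bzero ` HF Sig rk Q \<delta> F btimes)"

definition J_A where
  "J_A Sig rk Q \<delta> F bplus btimes bzero n =
     (let i = i_A Sig rk Q \<delta> F bplus btimes bzero; p = p_A Sig rk Q \<delta> F bplus btimes bzero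
      in if n < i then n else i + ((n - i) mod p))"

text \<open>A q-run on xi: a map from positions of xi to Q (extensional, i.e. undefined
  outside the positions) with the root mapped to q.\<close>

definition runs :: "'q set \<Rightarrow> 'q \<Rightarrow> 'f tree \<Rightarrow> (nat list \<Rightarrow> 'q) set" where
  "runs Q q \<xi> = {\<rho> \<in> positions \<xi> \<rightarrow>\<^sub>E Q. \<rho> [] = q}"

function wt :: "('q list \<Rightarrow> 'f \<Rightarrow> 'q \<Rightarrow> 'b) \<Rightarrow> ('b \<Rightarrow> 'b \<Rightarrow> 'b) \<Rightarrow> 'b
                 \<Rightarrow> 'f tree \<Rightarrow> (nat list \<Rightarrow> 'q) \<Rightarrow> 'b" where
  "wt \<delta> btimes bone (Node \<sigma> ts) \<rho> =
     btimes (mprod btimes bone (map (\<lambda>(i, t). wt \<delta> btimes bone t (\<lambda>w. \<rho> (i # w))) (zip [0..<length ts] ts)))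
           (\<delta> (map (\<lambda>i. \<rho> [i]) [0..<length ts]) \<sigma> (\<rho> []))"
  by pat_completeness auto
termination
  apply (relation "measure (\<lambda>(_, _, _, t, _). size t)")
   apply simp
  apply (auto dest!: set_zip_rightD)
  by (simp add: less_Suc_eq_le size_list_estimation')

definition p_count where
  "p_count Q \<delta> btimes bone \<xi> q b = card {\<rho> \<in> runs Q q \<xi>. wt \<delta> btimes bone \<xi> \<rho> = b}"

definition pi_count where
  "pi_count Sig rk Q \<delta> F bplus btimes bzero bone \<xi> q b =
     J_A Sig rk Q \<delta> F bplus btimes bzero (p_count Q \<delta> btimes bone \<xi> q b)"

text \<open>S_xi(q,b) for xi = Node sigma ts, as lists of length k of pairs (q_i, b_i).\<close>
definition S_set where
  "S_set Sig rk Q \<delta> F bplus btimes bzero bone \<sigma> ts q b =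
     {qbs. length qbs = length ts \<and>
           (\<forall>i<length ts. fst (qbs ! i) \<in> Q \<and> snd (qbs ! i) \<in> H_A Sig rk Q \<delta> btimes \<and>
               0 < pi_count Sig rk Q \<delta> F bplus btimes bzero bone (ts ! i) (fst (qbs ! i)) (snd (qbs ! i))) \<and>
           btimes (mprod btimes bone (map snd qbs)) (\<delta> (map fst qbs) \<sigma> q) = b}"

end

theory Submission
  imports Defs
begin

lemma pos_Node: "is_pos (Node g ts) w \<longleftrightarrow> w = [] \<or> (\<exists>i w'. w = i # w' \<and> i < length ts \<and> is_pos (ts!i) w')"
  by (auto elim: is_pos.cases intro: is_pos.intros)

lemma pos_Cons: "is_pos (Node g ts) (i#w) \<longleftrightarrow> i < length ts \<and> is_pos (ts!i) w"
  by (auto simp: pos_Node)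

lemma finite_positions: "finite (positions t)"
proof (induction t)
  case (Node g ts)
  have "positions (Node g ts) = insert [] (\<Union>i<length ts. (Cons i) ` positions (ts!i))"
    unfolding positions_def by (auto simp: pos_Node image_iff) blast
  then show ?case using Node by simp
qed

lemma map_zip_idx: "map (\<lambda>(i,t). f i t) (zip [0..<length ts] ts) = map (\<lambda>i. f i (ts!i)) [0..<length ts]"
  by (rule nth_equalityI) auto

lemma wt_eq: "wt \<delta> btimes bone (Node \<sigma> ts) \<rho> =
   btimes (mprod btimes bone (map (\<lambda>i. wt \<delta> btimes bone (ts!i) (\<lambda>w. \<rho> (i#w))) [0..<length ts]))
          (\<delta> (map (\<lambda>i. \<rho> [i]) [0..<length ts]) \<sigma> (\<rho> []))"
  by (simp add: map_zip_idx[where f = "\<lambda>i t. wt \<delta> btimes bone t (\<lambda>w. \<rho> (i#w))"])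

lemma child_run: "\<rho> \<in> positions (Node g ts) \<rightarrow>\<^sub>E Q \<Longrightarrow> i < length ts \<Longrightarrow> (\<lambda>w. \<rho> (i#w)) \<in> positions (ts!i) \<rightarrow>\<^sub>E Q"
  by (auto simp: PiE_iff extensional_def positions_def pos_Cons)

lemma mprod_H:
  assumes sb: "strong_bimonoid bplus btimes bzero bone"
  shows "set xs \<subseteq> H_A Sig rk Q \<delta> btimes \<Longrightarrow> xs \<noteq> [] \<Longrightarrow> mprod btimes bone xs \<in> H_A Sig rk Q \<delta> btimes"
proof (induction xs)
  case Nil then show ?case by simp
next
  case (Cons x xs)
  show ?case
  proof (cases "xs = []")
    case True then show ?thesis using Cons sb by (simp add: mprod_def strong_bimonoid_def)
  next
    case False then show ?thesis using Cons by (auto simp: mprod_def intro: H_A.mult)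
  qed
qed

lemma wt_H:
  assumes sb: "strong_bimonoid bplus btimes bzero bone"
  shows "wf_tree Sig rk t \<Longrightarrow> \<rho> \<in> positions t \<rightarrow>\<^sub>E Q \<Longrightarrow> wt \<delta> btimes bone t \<rho> \<in> H_A Sig rk Q \<delta> btimes"
proof (induction t arbitrary: \<rho>)
  case (Node \<sigma> ts)
  let ?ws = "map (\<lambda>i. wt \<delta> btimes bone (ts!i) (\<lambda>w. \<rho> (i#w))) [0..<length ts]"
  let ?d = "\<delta> (map (\<lambda>i. \<rho> [i]) [0..<length ts]) \<sigma> (\<rho> [])"
  have ws: "set ?ws \<subseteq> H_A Sig rk Q \<delta> btimes"
  proof
    fix x assume "x \<in> set ?ws"
    then obtain i where i: "i < length ts" "x = wt \<delta> btimes bone (ts!i) (\<lambda>w. \<rho> (i#w))" by auto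
    have "wf_tree Sig rk (ts!i)" using Node.prems(1) i by auto
    then show "x \<in> H_A Sig rk Q \<delta> btimes"
      using Node.IH[OF nth_mem[OF i(1)]] child_run[OF Node.prems(2) i(1)] i by auto
  qed
  have pi: "\<And>i. i < length ts \<Longrightarrow> \<rho> [i] \<in> Q"
  proof -
    fix i assume "i < length ts"
    then have "[i] \<in> positions (Node \<sigma> ts)" by (simp add: positions_def pos_Cons is_pos.root)
    then show "\<rho> [i] \<in> Q" using Node.prems(2) by auto
  qed
  have p0: "\<rho> [] \<in> Q" using Node.prems(2) by (auto simp: positions_def is_pos.root)
  have "?d \<in> im_delta Sig rk Q \<delta>" unfolding im_delta_def
    using Node.prems(1) pi p0 by fastforce
  then have d: "?d \<in> H_A Sig rk Q \<delta> btimes" by (rule H_A.base)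
  show ?case
  proof (cases "ts = []")
    case True then show ?thesis using d sb by (simp add: wt_eq mprod_def strong_bimonoid_def)
  next
    case False
    then have "?ws \<noteq> []" by simp
    then show ?thesis unfolding wt_eq using mprod_H[OF sb ws] d by (auto intro: H_A.mult)
  qed
qed

lemma idx_pos:
  assumes "finite_order bplus bzero x"
  shows "1 \<le> order_index bplus bzero x"
proof -
  let ?f = "\<lambda>n. nat_times bplus bzero n x"
  have fin: "finite (?f ` {1::nat..})" using assms unfolding finite_order_def
    by (rule finite_subset[rotated]) auto
  have inf: "infinite {1::nat..}" by (simp add: infinite_Ici)
  have "\<not> inj_on ?f {1..}" using fin inf finite_imageD by blast
  then obtain m n where mn: "m \<in> {1::nat..}" "n \<in> {1..}" "m \<noteq> n" "?f m = ?f n"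
    unfolding inj_on_def by blast
  have ex: "\<exists>i. 1 \<le> i \<and> (\<exists>k\<ge>1. ?f i = ?f (i + k))"
  proof (cases "m < n")
    case True then show ?thesis using mn by (intro exI[of _ m] conjI exI[of _ "n - m"]) auto
  next
    case False then have "n < m" using mn by auto
    then show ?thesis using mn by (intro exI[of _ n] conjI exI[of _ "m - n"]) auto
  qed
  show ?thesis unfolding order_index_def using LeastI_ex[OF ex] by blast
qed

lemma iA_pos:
  assumes fop: "finite_order_property Sig rk Q \<delta> F bplus btimes bzero"
    and b: "b \<in> H_A Sig rk Q \<delta> btimes" and q: "q \<in> Q" and fq: "finite Q"
  shows "1 \<le> i_A Sig rk Q \<delta> F bplus btimes bzero"
proof -
  have fH: "finite (H_A Sig rk Q \<delta> btimes)" using fop by (simp add: finite_order_property_def)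
  have "HF Sig rk Q \<delta> F btimes \<subseteq> (\<lambda>(a,c). btimes a c) ` (H_A Sig rk Q \<delta> btimes \<times> F ` Q)"
    unfolding HF_def by auto
  then have fin: "finite (HF Sig rk Q \<delta> F btimes)"
    by (rule finite_subset) (use fH fq in auto)
  have x: "btimes b (F q) \<in> HF Sig rk Q \<delta> F btimes" unfolding HF_def using b q by auto
  then have "1 \<le> order_index bplus bzero (btimes b (F q))"
    using fop x by (intro idx_pos) (auto simp: finite_order_property_def)
  also have "\<dots> \<le> i_A Sig rk Q \<delta> F bplus btimes bzero"
    unfolding i_A_def using fin x by (intro Max_ge) auto
  finally show ?thesis .
qed

lemma J_pos:
  assumes "1 \<le> i_A Sig rk Q \<delta> F bplus btimes bzero" "0 < n"
  shows "0 < J_A Sig rk Q \<delta> F bplus btimes bzero n"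
  using assms unfolding J_A_def Let_def by auto


theorem lemma7p2:
  fixes Sig :: "'f set" and rk :: "'f \<Rightarrow> nat"
    and bplus btimes :: "'b \<Rightarrow> 'b \<Rightarrow> 'b" and bzero bone :: 'b
    and Q :: "'q set" and \<delta> :: "'q list \<Rightarrow> 'f \<Rightarrow> 'q \<Rightarrow> 'b" and F :: "'q \<Rightarrow> 'b"
    and \<sigma> :: 'f and ts :: "'f tree list" and q :: 'q and b :: 'b
  assumes "ranked_alphabet Sig rk"
    and "strong_bimonoid bplus btimes bzero bone"
    and "wta Sig rk Q"
    and "finite_order_property Sig rk Q \<delta> F bplus btimes bzero"
    and "q \<in> Q" and "b \<in> H_A Sig rk Q \<delta> btimes"
    and "wf_tree Sig rk (Node \<sigma> ts)"
  shows "p_count Q \<delta> btimes bone (Node \<sigma> ts) q b =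
           (\<Sum>qbs \<in> S_set Sig rk Q \<delta> F bplus btimes bzero bone \<sigma> ts q b.
              \<Prod>i<length ts. p_count Q \<delta> btimes bone (ts ! i) (fst (qbs ! i)) (snd (qbs ! i)))"
proof -
  note sb = assms(2)
  have fQ: "finite Q" using assms(3) by (simp add: wta_def)
  have fH: "finite (H_A Sig rk Q \<delta> btimes)" using assms(4) by (simp add: finite_order_property_def)
  have iA: "1 \<le> i_A Sig rk Q \<delta> F bplus btimes bzero" using iA_pos[OF assms(4) assms(6) assms(5) fQ] .
  define k where "k = length ts"
  define \<xi> where "\<xi> = Node \<sigma> ts"
  define Cs where "Cs = PiE {..<k} (\<lambda>i. positions (ts!i) \<rightarrow>\<^sub>E Q)"
  define W where "W c = btimes (mprod btimes bone (map (\<lambda>i. wt \<delta> btimes bone (ts!i) (c i)) [0..<k]))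
                  (\<delta> (map (\<lambda>i. c i []) [0..<k]) \<sigma> q)" for c :: "nat \<Rightarrow> nat list \<Rightarrow> 'q"
  define Cb where "Cb = {c \<in> Cs. W c = b}"
  define R where "R = {\<rho> \<in> runs Q q \<xi>. wt \<delta> btimes bone \<xi> \<rho> = b}"
  define \<Phi> where "\<Phi> \<rho> = restrict (\<lambda>i w. \<rho> (i#w)) {..<k}" for \<rho> :: "nat list \<Rightarrow> 'q"
  define \<psi> where "\<psi> c = (\<lambda>w. case w of [] \<Rightarrow> q | i#w' \<Rightarrow> if i < k then c i w' else undefined)"
    for c :: "nat \<Rightarrow> nat list \<Rightarrow> 'q"
  define S where "S = S_set Sig rk Q \<delta> F bplus btimes bzero bone \<sigma> ts q b"
  define A where "A qbs i = {\<rho> \<in> runs Q (fst (qbs!i)) (ts!i). wt \<delta> btimes bone (ts!i) \<rho> = snd (qbs!i)}"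
    for qbs :: "('q \<times> 'b) list" and i

  have wtW: "wt \<delta> btimes bone \<xi> \<rho> = W (\<Phi> \<rho>)" if "\<rho> [] = q" for \<rho>
  proof -
    have e1: "map (\<lambda>i. wt \<delta> btimes bone (ts!i) (\<Phi> \<rho> i)) [0..<k] = map (\<lambda>i. wt \<delta> btimes bone (ts!i) (\<lambda>w. \<rho> (i#w))) [0..<k]"
      by (rule map_cong) (auto simp: \<Phi>_def)
    have e2: "map (\<lambda>i. \<Phi> \<rho> i []) [0..<k] = map (\<lambda>i. \<rho> [i]) [0..<k]"
      by (rule map_cong) (auto simp: \<Phi>_def)
    show ?thesis unfolding \<xi>_def wt_eq W_def e1 e2 k_def[symmetric] using that by simp
  qed
  have \<Phi>C: "\<Phi> \<rho> \<in> Cs" if "\<rho> \<in> positions \<xi> \<rightarrow>\<^sub>E Q" for \<rho>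
    unfolding Cs_def \<Phi>_def PiE_iff using child_run[OF that[unfolded \<xi>_def]] by (auto simp: k_def PiE_iff)
  have \<psi>R: "\<psi> c \<in> positions \<xi> \<rightarrow>\<^sub>E Q" if "c \<in> Cs" for c
  proof -
    have "\<psi> c w \<in> Q" if "w \<in> positions \<xi>" for w
      using that \<open>c \<in> Cs\<close> assms(5) unfolding \<psi>_def \<xi>_def Cs_def
      by (cases w) (auto simp: positions_def pos_Cons k_def)
    moreover have "\<psi> c w = undefined" if "w \<notin> positions \<xi>" for w
      using that \<open>c \<in> Cs\<close> unfolding \<psi>_def \<xi>_def Cs_def
      by (cases w) (auto simp: positions_def pos_Cons k_def PiE_iff extensional_def is_pos.root)
    ultimately show ?thesis by (auto simp: PiE_iff extensional_def)
  qed
  have \<Phi>\<psi>: "\<Phi> (\<psi> c) = c" if "c \<in> Cs" for c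
  proof
    fix i show "\<Phi> (\<psi> c) i = c i"
      using that unfolding \<Phi>_def \<psi>_def Cs_def by (auto simp: PiE_iff extensional_def)
  qed
  have \<psi>\<Phi>: "\<psi> (\<Phi> \<rho>) = \<rho>" if "\<rho> \<in> positions \<xi> \<rightarrow>\<^sub>E Q" "\<rho> [] = q" for \<rho>
  proof
    fix w show "\<psi> (\<Phi> \<rho>) w = \<rho> w"
      using that unfolding \<Phi>_def \<psi>_def \<xi>_def
      by (cases w) (auto simp: PiE_iff extensional_def positions_def pos_Cons k_def)
  qed
  have "bij_betw \<Phi> R Cb"
  proof (rule bij_betwI[where g = \<psi>])
    show "\<Phi> \<in> R \<rightarrow> Cb" using \<Phi>C wtW unfolding R_def Cb_def runs_def by auto
    show "\<psi> \<in> Cb \<rightarrow> R"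
    proof
      fix c assume c: "c \<in> Cb"
      then have "c \<in> Cs" "W c = b" by (auto simp: Cb_def)
      moreover have "\<psi> c [] = q" by (simp add: \<psi>_def)
      ultimately show "\<psi> c \<in> R" using \<psi>R wtW[of "\<psi> c"] \<Phi>\<psi> unfolding R_def runs_def by auto
    qed
    show "\<psi> (\<Phi> x) = x" if "x \<in> R" for x using that \<psi>\<Phi> unfolding R_def runs_def by auto
    show "\<Phi> (\<psi> y) = y" if "y \<in> Cb" for y using that \<Phi>\<psi> unfolding Cb_def by auto
  qed
  then have cardR: "card R = card Cb" by (rule bij_betw_same_card)
  define key where "key c = map (\<lambda>i. (c i [], wt \<delta> btimes bone (ts!i) (c i))) [0..<k]"
    for c :: "nat \<Rightarrow> nat list \<Rightarrow> 'q"
  have finA: "finite (A qbs i)" for qbs i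
    unfolding A_def runs_def
    by (rule finite_subset[of _ "positions (ts!i) \<rightarrow>\<^sub>E Q"]) (auto intro: finite_PiE finite_positions fQ)
  have key_eq: "key c = qbs" if "c \<in> PiE {..<k} (A qbs)" "length qbs = k" for c qbs
  proof (rule nth_equalityI)
    show "length (key c) = length qbs" using that by (simp add: key_def)
    fix i assume "i < length (key c)"
    then have i: "i < k" by (simp add: key_def)
    then have "c i \<in> A qbs i" using that by auto
    then show "key c ! i = qbs ! i" using i by (auto simp: key_def A_def runs_def prod_eq_iff)
  qed
  have Cb_eq: "Cb = (\<Union>qbs\<in>S. PiE {..<k} (A qbs))"
  proof (intro equalityI subsetI)
    fix c assume c: "c \<in> Cb"
    then have cC: "c \<in> Cs" and Wc: "W c = b" by (auto simp: Cb_def)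
    have ci: "c i \<in> positions (ts!i) \<rightarrow>\<^sub>E Q" if "i < k" for i using cC that by (auto simp: Cs_def)
    have cA: "c \<in> PiE {..<k} (A (key c))"
      using cC ci unfolding PiE_iff A_def runs_def key_def Cs_def by auto
    have "key c \<in> S"
      unfolding S_def S_set_def
    proof (intro CollectI conjI allI impI)
      show "length (key c) = length ts" by (simp add: key_def k_def)
      fix i assume i: "i < length ts"
      then have ik: "i < k" by (simp add: k_def)
      show "fst (key c ! i) \<in> Q" using ci[OF ik] ik
        by (auto simp: key_def positions_def is_pos.root)
      have "wf_tree Sig rk (ts!i)" using assms(7) i by auto
      then show "snd (key c ! i) \<in> H_A Sig rk Q \<delta> btimes" using wt_H[OF sb _ ci[OF ik]] ik
        by (simp add: key_def)
      have "c i \<in> A (key c) i" using cA ik by auto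
      then have "0 < card (A (key c) i)" using finA card_gt_0_iff by blast
      then have "0 < p_count Q \<delta> btimes bone (ts ! i) (fst (key c ! i)) (snd (key c ! i))"
        by (simp add: A_def p_count_def)
      then show "0 < pi_count Sig rk Q \<delta> F bplus btimes bzero bone (ts ! i) (fst (key c ! i)) (snd (key c ! i))"
        unfolding pi_count_def using J_pos[OF iA] by blast
    next
      show "btimes (mprod btimes bone (map snd (key c))) (\<delta> (map fst (key c)) \<sigma> q) = b"
        using Wc by (simp add: key_def W_def o_def)
    qed
    then show "c \<in> (\<Union>qbs\<in>S. PiE {..<k} (A qbs))" using cA by blast
  next
    fix c assume "c \<in> (\<Union>qbs\<in>S. PiE {..<k} (A qbs))"
    then obtain qbs where qS: "qbs \<in> S" and cA: "c \<in> PiE {..<k} (A qbs)" by blast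
    have len: "length qbs = k" using qS by (simp add: S_def S_set_def k_def)
    have kc: "key c = qbs" using key_eq[OF cA len] .
    have "c \<in> Cs" using cA unfolding Cs_def A_def runs_def PiE_iff by auto
    moreover have "W c = b"
    proof -
      have "map snd qbs = map (\<lambda>i. wt \<delta> btimes bone (ts!i) (c i)) [0..<k]"
           "map fst qbs = map (\<lambda>i. c i []) [0..<k]"
        using kc[symmetric] by (simp_all add: key_def o_def)
      then show ?thesis using qS unfolding W_def S_def S_set_def by auto
    qed
    ultimately show "c \<in> Cb" by (simp add: Cb_def)
  qed
  have finS: "finite S"
  proof (rule finite_subset)
    show "S \<subseteq> {xs. set xs \<subseteq> Q \<times> H_A Sig rk Q \<delta> btimes \<and> length xs = k}"
    proof
      fix xs assume xs: "xs \<in> S"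
      have "x \<in> Q \<times> H_A Sig rk Q \<delta> btimes" if "x \<in> set xs" for x
      proof -
        obtain i where "i < length xs" "x = xs ! i" using \<open>x \<in> set xs\<close> by (auto simp: in_set_conv_nth)
        moreover have "length xs = length ts" "\<forall>i<length ts. fst (xs ! i) \<in> Q \<and> snd (xs ! i) \<in> H_A Sig rk Q \<delta> btimes"
          using xs unfolding S_def S_set_def by auto
        ultimately show ?thesis by (simp add: mem_Times_iff)
      qed
      then show "xs \<in> {xs. set xs \<subseteq> Q \<times> H_A Sig rk Q \<delta> btimes \<and> length xs = k}"
        using xs unfolding S_def S_set_def k_def by auto
    qed
    show "finite {xs. set xs \<subseteq> Q \<times> H_A Sig rk Q \<delta> btimes \<and> length xs = k}"
      using fQ fH by (intro finite_lists_length_eq) auto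
  qed
  have "card Cb = (\<Sum>qbs\<in>S. card (PiE {..<k} (A qbs)))"
    unfolding Cb_eq
  proof (rule card_UN_disjoint[OF finS])
    show "\<forall>qbs\<in>S. finite (PiE {..<k} (A qbs))" using finA by (auto intro: finite_PiE)
    show "\<forall>qbs\<in>S. \<forall>qbs'\<in>S. qbs \<noteq> qbs' \<longrightarrow> PiE {..<k} (A qbs) \<inter> PiE {..<k} (A qbs') = {}"
    proof (intro ballI impI)
      fix qbs qbs' assume "qbs \<in> S" "qbs' \<in> S" "qbs \<noteq> qbs'"
      then have "length qbs = k" "length qbs' = k" by (auto simp: S_def S_set_def k_def)
      show "PiE {..<k} (A qbs) \<inter> PiE {..<k} (A qbs') = {}"
      proof (rule ccontr)
        assume "PiE {..<k} (A qbs) \<inter> PiE {..<k} (A qbs') \<noteq> {}"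
        then obtain c where c1: "c \<in> PiE {..<k} (A qbs)" and c2: "c \<in> PiE {..<k} (A qbs')" by blast
        have "qbs = key c" using key_eq[OF c1 \<open>length qbs = k\<close>] by simp
        also have "\<dots> = qbs'" using key_eq[OF c2 \<open>length qbs' = k\<close>] .
        finally show False using \<open>qbs \<noteq> qbs'\<close> by simp
      qed
    qed
  qed
  also have "\<dots> = (\<Sum>qbs\<in>S. \<Prod>i<k. card (A qbs i))" by (simp add: card_PiE)
  finally show ?thesis using cardR
    by (simp add: p_count_def R_def \<xi>_def S_def A_def k_def)
qed

end
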